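(* Let $X$ be a nonempty set, $f:X\to X$ a one-to-one function, $x_0\in X$, $k\in\mathbb{N}$, and $\tau_3$ the fuzzy topology on $X$ defined below. Then $f:(X,\tau_3)\to(X,\tau_3)$ is open if and only if $f$ is onto.
   Context: A fuzzy subset of $X$ is a function $\mu:X\to[0,1]$; union is the pointwise supremum, intersection the pointwise minimum; $\emptyset$ is the constant $0$ and $X$ the constant $1$. A fuzzy topology is a family of fuzzy subsets containing $\emptyset$ and $X$, closed under arbitrary unions and finite intersections; the topology generated by a base $\mathbb{B}$ consists of $\emptyset$ and all unions of subfamilies of $\mathbb{B}$. $\mathbb{N}=\{1,2,\dots\}$. Powers: $f^0=\mathrm{id}_X$, $f^{n+1}=f^n\circ f$ for $n\ge0$; for $n<0$, $f^n(x_0)$ denotes (when it exists) the unique $y$ with $f^{-n}(y)=x_0$ (unique since $f$ is injective). Definition of $\tau_3$: $A(x_0)$ is the set of all points $f^n(x_0)$, $n\in\mathbb{Z}$, that are defined; $N_0=\{n\in\mathbb{Z}: f^n(x_0)\text{ is defined and lies in }A(x_0)\}$. Let $C$ be the fuzzy set with $\mu_C(x)=1$ for $x\in X\setminus A(x_0)$ and $\mu_C(x)=0$ for $x\in A(x_0)$. For $n\in N_0$ let $\mu_{C_n}(x)=1$ if $x=f^n(x_0)$, $\mu_{C_n}(x)=1/k$ if $x\in A(x_0)$ and $x\neq f^n(x_0)$, and $\mu_{C_n}(x)=0$ otherwise. $\tau_3$ is generated by the base $\{C\}\cup\{C_n:n\in N_0\}$. The image of a fuzzy set $A$ is $\mu_{f(A)}(y)=\sup\{\mu_A(x):f(x)=y\}$,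 and $0$ if $y\notin f(X)$; $f$ is open if $f(U)$ is open for every open fuzzy set $U$. *)

theory Defs
  imports Complex_Main
begin

text \<open>Fuzzy subsets of the type 'a are functions 'a => real (values in [0,1]).\<close>

type_synonym 'a fuzzy = "'a \<Rightarrow> real"

definition fuzzy_empty :: "'a fuzzy" where
  "fuzzy_empty = (\<lambda>_. 0)"

definition fuzzy_Union :: "'a fuzzy set \<Rightarrow> 'a fuzzy" where
  "fuzzy_Union F = (\<lambda>x. Sup ((\<lambda>\<mu>. \<mu> x) ` F))"

text \<open>Topology generated by a base: the empty fuzzy set together with all unions of
  subfamilies of the base (the union of the empty subfamily is the empty fuzzy set).\<close>
definition generated_fuzzy_topology :: "'a fuzzy set \<Rightarrow> 'a fuzzy set" where
  "generated_fuzzy_topology B =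
     insert fuzzy_empty {fuzzy_Union F | F. F \<subseteq> B \<and> F \<noteq> {}}"

definition fuzzy_image :: "('a \<Rightarrow> 'b) \<Rightarrow> 'a fuzzy \<Rightarrow> 'b fuzzy" where
  "fuzzy_image f A = (\<lambda>y. if y \<in> range f then Sup ((\<lambda>x. A x) ` {x. f x = y}) else 0)"

definition fuzzy_open_map :: "'a fuzzy set \<Rightarrow> 'b fuzzy set \<Rightarrow> ('a \<Rightarrow> 'b) \<Rightarrow> bool" where
  "fuzzy_open_map T S f \<longleftrightarrow> (\<forall>U \<in> T. fuzzy_image f U \<in> S)"

text \<open>Integer powers: zpow_is f n x y means "f^n(x) is defined and equals y";
  for n < 0 this is the (unique, for injective f) y with f^(-n)(y) = x.\<close>
definition zpow_is :: "('a \<Rightarrow> 'a) \<Rightarrow> int \<Rightarrow> 'a \<Rightarrow> 'a \<Rightarrow> bool" where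
  "zpow_is f n x y \<longleftrightarrow>
     (if n \<ge> 0 then y = (f ^^ nat n) x else (f ^^ nat (- n)) y = x)"

definition orbitA :: "('a \<Rightarrow> 'a) \<Rightarrow> 'a \<Rightarrow> 'a set" where
  "orbitA f x0 = {y. \<exists>n. zpow_is f n x0 y}"

definition N0 :: "('a \<Rightarrow> 'a) \<Rightarrow> 'a \<Rightarrow> int set" where
  "N0 f x0 = {n. \<exists>y. zpow_is f n x0 y \<and> y \<in> orbitA f x0}"

definition tau3_C :: "('a \<Rightarrow> 'a) \<Rightarrow> 'a \<Rightarrow> 'a fuzzy" where
  "tau3_C f x0 = (\<lambda>x. if x \<in> orbitA f x0 then 0 else 1)"

definition tau3_Cn :: "('a \<Rightarrow> 'a) \<Rightarrow> 'a \<Rightarrow> nat \<Rightarrow> int \<Rightarrow> 'a fuzzy" where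
  "tau3_Cn f x0 k n = (\<lambda>x. if zpow_is f n x0 x then 1
                          else if x \<in> orbitA f x0 then 1 / real k else 0)"

definition tau3 :: "('a \<Rightarrow> 'a) \<Rightarrow> 'a \<Rightarrow> nat \<Rightarrow> 'a fuzzy set" where
  "tau3 f x0 k = generated_fuzzy_topology
     (insert (tau3_C f x0) (tau3_Cn f x0 k ` N0 f x0))"

end

theory Submission
  imports Defs
begin

lemma zpow_shift:
  assumes "inj f"
  shows "zpow_is f (n+1) x0 (f x) \<longleftrightarrow> zpow_is f n x0 x"
proof (cases "n \<ge> 0")
  case True
  then have "nat (n+1) = Suc (nat n)" by simp
  then show ?thesis using True assms by (simp add: zpow_is_def inj_eq)
next
  case False
  show ?thesis
  proof (cases "n = -1")
    case True
    then show ?thesis by (simp add: zpow_is_def)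
  next
    case F2: False
    with False have "nat (-(n+1)) \<ge> 1" "nat (-n) = Suc (nat (-(n+1)))" by auto
    then show ?thesis using False F2
      by (simp add: zpow_is_def funpow_Suc_right del: funpow.simps)
  qed
qed

lemma orbit_shift:
  assumes "inj f"
  shows "f x \<in> orbitA f x0 \<longleftrightarrow> x \<in> orbitA f x0"
proof
  assume "f x \<in> orbitA f x0"
  then obtain n where "zpow_is f n x0 (f x)" by (auto simp: orbitA_def)
  then have "zpow_is f ((n-1)+1) x0 (f x)" by simp
  then have "zpow_is f (n-1) x0 x" using zpow_shift[OF assms] by blast
  then show "x \<in> orbitA f x0" by (auto simp: orbitA_def)
next
  assume "x \<in> orbitA f x0"
  then obtain n where "zpow_is f n x0 x" by (auto simp: orbitA_def)
  then have "zpow_is f (n+1) x0 (f x)" using zpow_shift[OF assms] by blast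
  then show "f x \<in> orbitA f x0" by (auto simp: orbitA_def)
qed

lemma image_at:
  assumes "inj f"
  shows "fuzzy_image f U (f x) = U x"
proof -
  have "{x'. f x' = f x} = {x}" using assms by (auto simp: inj_eq)
  then show ?thesis by (simp add: fuzzy_image_def)
qed

lemma bdd1:
  assumes "F \<subseteq> insert (tau3_C f x0) (tau3_Cn f x0 k ` N0 f x0)" "k \<ge> 1"
  shows "bdd_above ((\<lambda>\<mu>. \<mu> x) ` F)"
proof -
  have "\<forall>\<mu>\<in>F. \<mu> x \<le> 1" using assms
    by (auto simp: tau3_C_def tau3_Cn_def)
  then show ?thesis by (auto intro: bdd_aboveI2)
qed

lemma key:
  assumes F: "F \<subseteq> insert (tau3_C f x0) (tau3_Cn f x0 k ` N0 f x0)" "F \<noteq> {}"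
    and k: "k \<ge> 1"
    and y: "fuzzy_Union F y = 0"
    and yz: "y \<in> orbitA f x0 \<longleftrightarrow> z \<in> orbitA f x0"
  shows "fuzzy_Union F z = 0"
proof -
  have bd: "\<And>x. bdd_above ((\<lambda>\<mu>. \<mu> x) ` F)" using bdd1[OF F(1) k] .
  have up: "\<And>\<mu> x. \<mu> \<in> F \<Longrightarrow> \<mu> x \<le> fuzzy_Union F x"
    unfolding fuzzy_Union_def using bd by (intro cSup_upper) auto
  have kpos: "1 / real k > 0" using k by simp
  show ?thesis
  proof (cases "y \<in> orbitA f x0")
    case True
    have "F \<subseteq> {tau3_C f x0}"
    proof
      fix \<mu> assume m: "\<mu> \<in> F"
      show "\<mu> \<in> {tau3_C f x0}"
      proof (rule ccontr)
        assume "\<mu> \<notin> {tau3_C f x0}"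
        with m F obtain n where "\<mu> = tau3_Cn f x0 k n" by auto
        then have "\<mu> y > 0" using True kpos by (auto simp: tau3_Cn_def)
        with up[OF m, of y] y show False by simp
      qed
    qed
    with F(2) have "F = {tau3_C f x0}" by auto
    then show ?thesis using True yz by (simp add: fuzzy_Union_def tau3_C_def)
  next
    case False
    have "tau3_C f x0 \<notin> F"
    proof
      assume "tau3_C f x0 \<in> F"
      from up[OF this, of y] y False show False by (simp add: tau3_C_def)
    qed
    then have "\<forall>\<mu>\<in>F. \<mu> z = 0" using F(1) False yz
      by (auto simp: tau3_Cn_def orbitA_def)
    then have "(\<lambda>\<mu>. \<mu> z) ` F = {0}" using F(2) by auto
    then show ?thesis by (simp add: fuzzy_Union_def)
  qed
qed

theorem theorem2p13:
  fixes f :: "'a \<Rightarrow> 'a" and x0 :: 'a and k :: nat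
  assumes "inj f" and "k \<ge> 1"
  shows "fuzzy_open_map (tau3 f x0 k) (tau3 f x0 k) f \<longleftrightarrow> surj f"
proof
  let ?B = "insert (tau3_C f x0) (tau3_Cn f x0 k ` N0 f x0)"
  have N00: "0 \<in> N0 f x0"
    unfolding N0_def orbitA_def zpow_is_def by (rule CollectI, rule exI[of _ x0]) (auto intro: exI[of _ 0])
  assume op: "fuzzy_open_map (tau3 f x0 k) (tau3 f x0 k) f"
  show "surj f"
  proof (rule ccontr)
    assume "\<not> surj f"
    then obtain y where yn: "y \<notin> range f" by auto
    let ?F = "{tau3_C f x0, tau3_Cn f x0 k 0}"
    let ?U = "fuzzy_Union ?F"
    have Fsub: "?F \<subseteq> ?B" using N00 by auto
    have "?U \<in> tau3 f x0 k" unfolding tau3_def generated_fuzzy_topology_def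
      using Fsub by blast
    then have W: "fuzzy_image f ?U \<in> tau3 f x0 k" using op by (simp add: fuzzy_open_map_def)
    have Wy: "fuzzy_image f ?U y = 0" using yn by (simp add: fuzzy_image_def)
    have Upos: "?U x > 0" for x
    proof -
      have "tau3_C f x0 x \<le> ?U x" "tau3_Cn f x0 k 0 x \<le> ?U x"
        unfolding fuzzy_Union_def by (auto intro!: cSup_upper)
      moreover have "tau3_C f x0 x > 0 \<or> tau3_Cn f x0 k 0 x > 0"
        using assms(2) by (auto simp: tau3_C_def tau3_Cn_def)
      ultimately show ?thesis by linarith
    qed
    have Wfy: "fuzzy_image f ?U (f y) > 0" using image_at[OF assms(1)] Upos by simp
    have yz: "y \<in> orbitA f x0 \<longleftrightarrow> f y \<in> orbitA f x0" using orbit_shift[OF assms(1)] by simp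
    from W show False
      unfolding tau3_def generated_fuzzy_topology_def
    proof (elim insertE)
      assume "fuzzy_image f ?U = fuzzy_empty"
      then show False using Wfy by (simp add: fuzzy_empty_def)
    next
      assume "fuzzy_image f ?U \<in> {fuzzy_Union F |F. F \<subseteq> ?B \<and> F \<noteq> {}}"
      then obtain F where F: "F \<subseteq> ?B" "F \<noteq> {}" "fuzzy_image f ?U = fuzzy_Union F" by auto
      have "fuzzy_Union F (f y) = 0"
        using key[OF F(1) F(2) assms(2), of y "f y"] Wy F(3) yz by simp
      then show False using Wfy F(3) by simp
    qed
  qed
next
  let ?B = "insert (tau3_C f x0) (tau3_Cn f x0 k ` N0 f x0)"
  assume s: "surj f"
  have img: "fuzzy_image f U (f x) = U x" for U x using image_at[OF assms(1)] .
  have eqI: "G = H" if "\<And>x. G (f x) = H (f x)" for G H :: "'a fuzzy"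
  proof
    fix z
    from s obtain x where "z = f x" by (metis surjD)
    then show "G z = H z" using that by simp
  qed
  have imgB: "fuzzy_image f \<mu> \<in> ?B" if "\<mu> \<in> ?B" for \<mu>
  proof -
    from that show ?thesis
    proof (elim insertE)
      assume "\<mu> = tau3_C f x0"
      then have "fuzzy_image f \<mu> = tau3_C f x0"
        by (intro eqI) (simp add: img tau3_C_def orbit_shift[OF assms(1)])
      then show ?thesis by simp
    next
      assume "\<mu> \<in> tau3_Cn f x0 k ` N0 f x0"
      then obtain n where n: "n \<in> N0 f x0" "\<mu> = tau3_Cn f x0 k n" by auto
      have "n + 1 \<in> N0 f x0"
      proof -
        from n(1) obtain y where "zpow_is f n x0 y" by (auto simp: N0_def)
        then have "zpow_is f (n+1) x0 (f y)" using zpow_shift[OF assms(1)] by blast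
        then show ?thesis by (auto simp: N0_def orbitA_def)
      qed
      moreover have "fuzzy_image f \<mu> = tau3_Cn f x0 k (n+1)"
        by (intro eqI) (simp add: img n(2) tau3_Cn_def orbit_shift[OF assms(1)]
            zpow_shift[OF assms(1)])
      ultimately show ?thesis by simp
    qed
  qed
  show "fuzzy_open_map (tau3 f x0 k) (tau3 f x0 k) f"
    unfolding fuzzy_open_map_def
  proof
    fix U assume "U \<in> tau3 f x0 k"
    then have "U \<in> insert fuzzy_empty {fuzzy_Union F |F. F \<subseteq> ?B \<and> F \<noteq> {}}"
      unfolding tau3_def generated_fuzzy_topology_def .
    then show "fuzzy_image f U \<in> tau3 f x0 k"
    proof (elim insertE)
      assume "U = fuzzy_empty"
      then have "fuzzy_image f U = fuzzy_empty"
        by (intro eqI) (simp add: img fuzzy_empty_def)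
      then show "fuzzy_image f U \<in> tau3 f x0 k" by (simp add: tau3_def generated_fuzzy_topology_def)
    next
      assume "U \<in> {fuzzy_Union F |F. F \<subseteq> ?B \<and> F \<noteq> {}}"
      then obtain F where F: "F \<subseteq> ?B" "F \<noteq> {}" "U = fuzzy_Union F" by auto
      have "fuzzy_image f U = fuzzy_Union (fuzzy_image f ` F)"
      proof (intro eqI)
        fix x
        have "(\<lambda>\<mu>. \<mu> (f x)) ` fuzzy_image f ` F = (\<lambda>\<mu>. \<mu> x) ` F"
          by (auto simp: img image_iff)
        then show "fuzzy_image f U (f x) = fuzzy_Union (fuzzy_image f ` F) (f x)"
          by (simp add: img F(3) fuzzy_Union_def)
      qed
      moreover have "fuzzy_image f ` F \<subseteq> ?B" using F(1) imgB by blast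
      ultimately show "fuzzy_image f U \<in> tau3 f x0 k" using F(2) unfolding tau3_def generated_fuzzy_topology_def by blast
    qed
  qed
qed

end
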